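(* Assume $0<A,B\le 1$ and $B\ge B_0(A)$. Let $U$ satisfy $G_{A,B}(U)=0$ and $L(A,B)\le U\le R(A,B)$. Then \[ \frac1\pi G'_{A,B}(U)\ge\sqrt{2(1+AB)}, \] equivalently \[ (A+B)\sin(\pi U)+B\kappa\sin(\pi M(U))+A\varepsilon\sin(\pi N(U))\ge\sqrt{2(1+AB)}. \]
   Context: For $0<A,B\le1$ put $\kappa=\sqrt{1-A^2}$, $\varepsilon=\sqrt{1-B^2}$, $P=P(A,B)=\frac{1+AB}{B(A+B)}$, $M(U)=\kappa(P-U)$, $N(U)=\varepsilon\left(U+\frac{\kappa^2}{A(A+B)}\right)$, and $G_{A,B}(U)=B\cos(\pi M(U))-A\cos(\pi N(U))-(A+B)\cos(\pi U)$. Further $L(A,B)=\frac{\kappa}{1+\kappa}\frac{1+AB}{B(A+B)}$, $R(A,B)=\frac{1-\varepsilon\kappa^2/[A(A+B)]}{1+\varepsilon}$, and $B_0(A)=\frac{-A(1-\kappa)+\sqrt{A^2(1-\kappa)^2+8\kappa(1+\kappa)}}{2(1+\kappa)}$. *)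

theory Defs
  imports "HOL-Analysis.Analysis"
begin

definition kap :: "real \<Rightarrow> real" where "kap A = sqrt (1 - A^2)"
definition eps :: "real \<Rightarrow> real" where "eps B = sqrt (1 - B^2)"
definition PP :: "real \<Rightarrow> real \<Rightarrow> real" where "PP A B = (1 + A*B) / (B*(A+B))"
definition MM :: "real \<Rightarrow> real \<Rightarrow> real \<Rightarrow> real" where "MM A B U = kap A * (PP A B - U)"
definition NN :: "real \<Rightarrow> real \<Rightarrow> real \<Rightarrow> real" where
  "NN A B U = eps B * (U + (kap A)^2 / (A*(A+B)))"
definition GG :: "real \<Rightarrow> real \<Rightarrow> real \<Rightarrow> real" where
  "GG A B U = B * cos (pi * MM A B U) - A * cos (pi * NN A B U) - (A+B) * cos (pi * U)"
definition LL :: "real \<Rightarrow> real \<Rightarrow> real" where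
  "LL A B = kap A / (1 + kap A) * ((1 + A*B) / (B*(A+B)))"
definition RR :: "real \<Rightarrow> real \<Rightarrow> real" where
  "RR A B = (1 - eps B * (kap A)^2 / (A*(A+B))) / (1 + eps B)"
definition B0 :: "real \<Rightarrow> real" where
  "B0 A = (- A * (1 - kap A) + sqrt (A^2 * (1 - kap A)^2 + 8 * kap A * (1 + kap A))) / (2 * (1 + kap A))"

end

theory Submission
  imports Defs
begin


lemma jordan_sin:
  fixes u :: real
  assumes "0 \<le> u" "u \<le> 1/2"
  shows "2*u \<le> sin (pi*u)"
proof -
  have conc: "concave_on {0..pi/2} sin"
    by (rule f''_le0_imp_concave[where f' = cos and f'' = "\<lambda>x. - sin x"])
       (auto intro!: derivative_eq_intros sin_ge_zero)
  have "(1 - 2*u) * sin 0 + (2*u) * sin (pi/2) \<le> sin ((1 - 2*u) *\<^sub>R 0 + (2*u) *\<^sub>R (pi/2))"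
    by (rule concave_onD[OF conc]) (use assms in auto)
  moreover have "(1 - 2*u) *\<^sub>R 0 + (2*u) *\<^sub>R (pi/2) = pi*u" by simp
  ultimately show ?thesis by (simp add: mult.commute)
qed

lemma cos_lower: "1 - t^2/2 \<le> cos (t::real)"
proof -
  have c: "cos t = 1 - 2 * (sin (t/2))^2" using cos_double_sin[of "t/2"] by simp
  have "(sin (t/2))^2 \<le> (t/2)^2"
    using abs_sin_x_le_abs_x[of "t/2"] abs_le_square_iff by blast
  then show ?thesis using c by (simp add: power_divide)
qed

lemma pi_sq_bound: "pi^2 / 2 \<le> (4.935::real)"
proof -
  have p: "pi \<le> 3.1416" using pi_approx by simp
  have "pi * pi \<le> 3.1416 * 3.1416"
    by (rule mult_mono) (use p pi_gt_zero in auto)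
  then show ?thesis by (simp add: power2_eq_square)
qed

lemma frac_id:
  fixes a b c T2 Y2 :: real
  assumes "b > 0" "Y2 > 0" "1 + a > 0"
  shows "(c*T2/(4*b*Y2) - b/(1+a)) * (4*b*Y2*(1+a)) = c*T2*(1+a) - 4*b^2*Y2"
proof -
  have 1: "c*T2/(4*b*Y2) * (4*b*Y2*(1+a)) = c*T2*(1+a)" using assms by (simp add: field_simps)
  have 2: "b/(1+a) * (4*b*Y2*(1+a)) = 4*b^2*Y2" using assms by (simp add: field_simps power2_eq_square)
  show ?thesis by (simp only: left_diff_distrib 1 2)
qed

lemma cell_bound:
  fixes a b k aL aH Kc bt :: real
  assumes ha: "aL \<le> a" "a \<le> aH" and hb: "0 < b" "b \<le> 1" and hk: "0 \<le> k" "k^2 = 1 - a^2"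
    and hS: "2 - a^2 \<le> b^2*(1+a^2)"
    and n1: "0 \<le> aL" "aH \<le> 1" "0 < bt" "0 \<le> Kc" "1 - aL^2 \<le> Kc^2"
      "bt^2*(1+aH^2) \<le> 2 - aH^2" "aH \<le> 2*bt"
    and n2: "Kc * (4.935*(2 + aH*bt - bt^2)^2/(4*bt*(aL+bt)^2) - bt/(1+aH)) \<le> 1"
  shows "k * (4.935*(2+a*b-b^2)^2/(4*b*(a+b)^2) - b/(1+a)) \<le> 1"
proof -
  have aL': "0 \<le> a" using ha n1 by simp
  have kK: "k \<le> Kc"
  proof -
    have "aL^2 \<le> a^2" using ha(1) n1(1) by (intro power_mono) auto
    then have "k^2 \<le> Kc^2" using hk n1 by simp
    then show ?thesis using n1(4) by (rule power2_le_imp_le)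
  qed
  have bb: "bt \<le> b"
  proof (rule ccontr)
    assume "\<not> bt \<le> b"
    then have "b < bt" by simp
    then have "b^2 < bt^2" using hb by (intro power_strict_mono) auto
    then have "b^2*(1+a^2) < bt^2*(1+a^2)" by (intro mult_strict_right_mono) (auto simp: add_pos_nonneg)
    moreover have "a^2 \<le> aH^2" using ha aL' by (intro power_mono) auto
    moreover have "bt^2*(1+a^2) \<le> bt^2*(1+aH^2)" using calculation(2) by (intro mult_left_mono) auto
    ultimately show False using hS n1(6) by linarith
  qed
  define Tm where "Tm = 2 + aH*bt - bt^2"
  define T where "T = 2+a*b-b^2"
  have T0: "0 \<le> T"
  proof -
    have "b^2 \<le> 1" using hb by (intro power_le_one) auto
    moreover have "0 \<le> a*b" using aL' hb by simp
    ultimately show ?thesis unfolding T_def by linarith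
  qed
  have TT: "T \<le> Tm"
  proof -
    have "a*b \<le> aH*b" using ha hb by (intro mult_right_mono) auto
    moreover have "(aH*b - b^2) - (aH*bt - bt^2) = (b - bt)*(aH - b - bt)"
      by (simp add: algebra_simps power2_eq_square)
    moreover have "(b - bt)*(aH - b - bt) \<le> 0"
      using bb n1(7) by (intro mult_nonneg_nonpos) auto
    ultimately show ?thesis unfolding T_def Tm_def by linarith
  qed
  have TT2: "T^2 \<le> Tm^2" using T0 TT by (intro power_mono) auto
  have Y: "aL + bt \<le> a + b" using ha bb by simp
  have Y0: "0 < aL + bt" using n1 by simp
  have den: "4*bt*(aL+bt)^2 \<le> 4*b*(a+b)^2"
  proof -
    have "(aL+bt)^2 \<le> (a+b)^2" using Y Y0 by (intro power_mono) auto
    then show ?thesis using bb n1(3) by (intro mult_mono) auto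
  qed
  have f1: "4.935*T^2/(4*b*(a+b)^2) \<le> 4.935*Tm^2/(4*bt*(aL+bt)^2)"
    by (rule frac_le) (use TT2 den Y0 n1(3) in auto)
  have f2: "bt/(1+aH) \<le> b/(1+a)"
    by (rule frac_le) (use bb ha n1 aL' in auto)
  define Bm where "Bm = 4.935*Tm^2/(4*bt*(aL+bt)^2) - bt/(1+aH)"
  have br: "4.935*T^2/(4*b*(a+b)^2) - b/(1+a) \<le> Bm" unfolding Bm_def using f1 f2 by linarith
  have "k * (4.935*T^2/(4*b*(a+b)^2) - b/(1+a)) \<le> k * Bm" using br hk by (intro mult_left_mono) auto
  also have "\<dots> \<le> 1"
  proof (cases "0 \<le> Bm")
    case True
    then have "k * Bm \<le> Kc * Bm" using kK by (intro mult_right_mono) auto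
    then show ?thesis using n2 unfolding Bm_def Tm_def by simp
  next
    case False
    then have "k * Bm \<le> 0" using hk by (simp add: mult_nonneg_nonpos)
    then show ?thesis by simp
  qed
  finally show ?thesis unfolding T_def .
qed

lemma poly_bound:
  fixes a b k :: real
  assumes ha: "0 < a" "a \<le> 1" and hb: "0 < b" "b \<le> 1" and hk: "0 \<le> k" "k^2 = 1 - a^2"
    and hS: "a^2*b^2 + a^2 + b^2 \<ge> 2"
  shows "k * (4.935*(2+a*b-b^2)^2/(4*b*(a+b)^2) - b/(1+a)) \<le> 1"
proof -
  have hS': "2 - a^2 \<le> b^2*(1+a^2)" using hS by (simp add: algebra_simps)
  have "b^2 \<le> 1" using hb by (intro power_le_one) auto
  then have "a^2*b^2 \<le> a^2" by (simp add: mult_left_le)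
  then have "a^2 \<ge> 1/2" using hS \<open>b^2 \<le> 1\<close> by linarith
  then have a07: "0.7 \<le> a"
  proof -
    assume h: "a^2 \<ge> 1/2"
    show "0.7 \<le> a"
    proof (rule ccontr)
      assume "\<not> 0.7 \<le> a"
      then have "a^2 < 0.7^2" using ha by (intro power_strict_mono) auto
      then show False using h by (simp add: power2_eq_square)
    qed
  qed
  have c0: "0.7 \<le> a \<Longrightarrow> a \<le> 0.73 \<Longrightarrow> ?thesis"
    by (rule cell_bound[where aL="0.7" and aH="0.73" and Kc="0.715" and bt="0.978"]) (use hb hk hS' in \<open>simp_all add: power2_eq_square\<close>)
  have c1: "0.73 \<le> a \<Longrightarrow> a \<le> 0.76 \<Longrightarrow> ?thesis"
    by (rule cell_bound[where aL="0.73" and aH="0.76" and Kc="0.684" and bt="0.949"]) (use hb hk hS' in \<open>simp_all add: power2_eq_square\<close>)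
  have c2: "0.76 \<le> a \<Longrightarrow> a \<le> 0.79 \<Longrightarrow> ?thesis"
    by (rule cell_bound[where aL="0.76" and aH="0.79" and Kc="0.65" and bt="0.92"]) (use hb hk hS' in \<open>simp_all add: power2_eq_square\<close>)
  have c3: "0.79 \<le> a \<Longrightarrow> a \<le> 0.82 \<Longrightarrow> ?thesis"
    by (rule cell_bound[where aL="0.79" and aH="0.82" and Kc="0.614" and bt="0.89"]) (use hb hk hS' in \<open>simp_all add: power2_eq_square\<close>)
  have c4: "0.82 \<le> a \<Longrightarrow> a \<le> 0.85 \<Longrightarrow> ?thesis"
    by (rule cell_bound[where aL="0.82" and aH="0.85" and Kc="0.573" and bt="0.861"]) (use hb hk hS' in \<open>simp_all add: power2_eq_square\<close>)
  have c5: "0.85 \<le> a \<Longrightarrow> a \<le> 0.88 \<Longrightarrow> ?thesis"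
    by (rule cell_bound[where aL="0.85" and aH="0.88" and Kc="0.527" and bt="0.831"]) (use hb hk hS' in \<open>simp_all add: power2_eq_square\<close>)
  have c6: "0.88 \<le> a \<Longrightarrow> a \<le> 0.91 \<Longrightarrow> ?thesis"
    by (rule cell_bound[where aL="0.88" and aH="0.91" and Kc="0.475" and bt="0.8"]) (use hb hk hS' in \<open>simp_all add: power2_eq_square\<close>)
  have c7: "0.91 \<le> a \<Longrightarrow> a \<le> 0.94 \<Longrightarrow> ?thesis"
    by (rule cell_bound[where aL="0.91" and aH="0.94" and Kc="0.415" and bt="0.769"]) (use hb hk hS' in \<open>simp_all add: power2_eq_square\<close>)
  have c8: "0.94 \<le> a \<Longrightarrow> a \<le> 0.97 \<Longrightarrow> ?thesis"
    by (rule cell_bound[where aL="0.94" and aH="0.97" and Kc="0.342" and bt="0.738"]) (use hb hk hS' in \<open>simp_all add: power2_eq_square\<close>)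
  have c9: "0.97 \<le> a \<Longrightarrow> a \<le> 1 \<Longrightarrow> ?thesis"
    by (rule cell_bound[where aL="0.97" and aH="1" and Kc="0.244" and bt="0.707"]) (use hb hk hS' in \<open>simp_all add: power2_eq_square\<close>)
  show ?thesis
    using c0 c1 c2 c3 c4 c5 c6 c7 c8 c9 a07 ha(2) by linarith
qed

lemma sos_core:
  fixes a b k u :: real
  assumes ha: "a > 0" "a \<le> 1" and hb: "b > 0" "b \<le> 1" and hk: "k \<ge> 0" "k^2 = 1 - a^2"
    and hS: "a^2*b^2 \<ge> k^2 + 1 - b^2"
    and hu: "u \<ge> 0" "2*u*b*(a+b) = k*(2+a*b-b^2)"
  shows "b*(a - 1 + 4.935*u^2) \<le> k"
proof -
  define Z where "Z = 4.935*(2+a*b-b^2)^2*(1+a) - 4*b^2*(a+b)^2"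
  define D where "D = 4*b*(a+b)^2*(1+a)"
  have D0: "D > 0" unfolding D_def using ha hb by simp
  have id: "b*(a - 1 + 4.935*u^2) * D = k^2 * Z"
    unfolding D_def Z_def using hk(2) hu(2) by algebra
  have S2: "a^2*b^2 + a^2 + b^2 \<ge> 2" using hS hk(2) by simp
  have kz: "k * Z \<le> D"
  proof -
    have pb: "k * (4.935*(2+a*b-b^2)^2/(4*b*(a+b)^2) - b/(1+a)) \<le> 1"
      by (rule poly_bound[OF ha hb hk S2])
    have fi: "(4.935*(2+a*b-b^2)^2/(4*b*(a+b)^2) - b/(1+a)) * D = Z"
      unfolding Z_def D_def
      by (rule frac_id) (use ha hb in simp_all)
    have "k * Z = (k * (4.935*(2+a*b-b^2)^2/(4*b*(a+b)^2) - b/(1+a))) * D"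
      using fi by (simp add: mult.assoc)
    also have "\<dots> \<le> 1 * D" using pb D0 by (intro mult_right_mono) auto
    finally show ?thesis by simp
  qed
  have "k^2 * Z \<le> k * D"
  proof -
    have "k * (k * Z) \<le> k * D" by (rule mult_left_mono[OF kz hk(1)])
    then show ?thesis by (simp add: power2_eq_square mult.assoc)
  qed
  then have "b*(a - 1 + 4.935*u^2) * D \<le> k * D" using id by simp
  then show ?thesis using D0 by simp
qed

lemma key_ineq:
  fixes a b k e u w x y m1 m2 :: real
  assumes ha: "0 < a" "a \<le> 1" and hb: "0 < b" "b \<le> 1"
    and hk: "0 \<le> k" "k^2 = 1 - a^2" and he: "0 \<le> e" "e^2 = 1 - b^2"
    and hu: "0 \<le> u" "2*u*b*(a+b) = k*(2+a*b-b^2)"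
    and hv: "0 \<le> w" "2*w*a*(a+b) = e*(2+a*b-a^2)"
    and hs1: "2*u \<le> m1" and hs2: "2*w \<le> m2"
    and hx: "0 \<le> x" "x \<le> a" "1 - 4.935*u^2 \<le> x"
    and hy: "0 \<le> y" "y \<le> b" "1 - 4.935*w^2 \<le> y"
  shows "2 + 2*a*b \<le> (a+b + (b*k*m1 + a*e*m2))^2 + (b*x - a*y)^2 - 2*a*b*(a*x - b*y)*(b*x - a*y)"
proof -
  define p where "p = b*x - a*y"
  define r where "r = b*k^2*x - a*e^2*y"
  define q where "q = b*k*m1 + a*e*m2"
  have id: "(a+b+q)^2 + p^2 - 2*a*b*(a*x - b*y)*p - (2 + 2*a*b)
      = 2*(a+b)*q + q^2 - p^2 + 2*p*r - k^2 - e^2"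
    unfolding p_def r_def using hk(2) he(2) by algebra
  have q1: "(a+b)*(b*k*m1) \<ge> k^2*(2+a*b-b^2)"
  proof -
    have "(a+b)*b*k*(2*u) \<le> (a+b)*b*k*m1"
      by (rule mult_left_mono[OF hs1]) (use ha hb hk in auto)
    moreover have "(a+b)*b*k*(2*u) = k^2*(2+a*b-b^2)"
    proof -
      have "(a+b)*b*k*(2*u) = k*(2*u*b*(a+b))" by (simp add: algebra_simps)
      also have "\<dots> = k*(k*(2+a*b-b^2))" using hu(2) by simp
      finally show ?thesis by (simp add: power2_eq_square)
    qed
    ultimately show ?thesis by (simp add: algebra_simps)
  qed
  have q2: "(a+b)*(a*e*m2) \<ge> e^2*(2+a*b-a^2)"
  proof -
    have "(a+b)*a*e*(2*w) \<le> (a+b)*a*e*m2"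
      by (rule mult_left_mono[OF hs2]) (use ha hb he in auto)
    moreover have "(a+b)*a*e*(2*w) = e^2*(2+a*b-a^2)"
    proof -
      have "(a+b)*a*e*(2*w) = e*(2*w*a*(a+b))" by (simp add: algebra_simps)
      also have "\<dots> = e*(e*(2+a*b-a^2))" using hv(2) by simp
      finally show ?thesis by (simp add: power2_eq_square)
    qed
    ultimately show ?thesis by (simp add: algebra_simps)
  qed
  have e1: "k^2*(2+a*b-b^2) = k^2*(1+a*b) + k^2*e^2" using he(2) by algebra
  have e2: "e^2*(2+a*b-a^2) = e^2*(1+a*b) + k^2*e^2" using hk(2) by algebra
  have qlb: "2*(a+b)*q \<ge> 2*(1+a*b)*(k^2+e^2) + 4*k^2*e^2"
    using q1 q2 e1 e2 unfolding q_def by (simp add: algebra_simps)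
  have ab1: "a*b \<le> 1" using ha hb by (simp add: mult_le_one)
  have ab0: "0 \<le> a*b" using ha hb by simp
  have rb: "\<bar>r\<bar> \<le> a*b*(k^2+e^2)"
  proof -
    have "b*k^2*x \<le> b*k^2*a" by (rule mult_left_mono) (use hx hb in auto)
    moreover have "a*e^2*y \<le> a*e^2*b" by (rule mult_left_mono) (use hy ha in auto)
    moreover have "0 \<le> b*k^2*x" using hb hx by simp
    moreover have "0 \<le> a*e^2*y" using ha hy by simp
    ultimately show ?thesis unfolding r_def by (simp add: algebra_simps abs_le_iff)
  qed
  have pb: "\<bar>p\<bar> \<le> a*b"
  proof -
    have "b*x \<le> b*a" by (rule mult_left_mono) (use hx hb in auto)
    moreover have "a*y \<le> a*b" by (rule mult_left_mono) (use hy ha in auto)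
    moreover have "0 \<le> b*x" using hb hx by simp
    moreover have "0 \<le> a*y" using ha hy by simp
    ultimately show ?thesis unfolding p_def by (simp add: algebra_simps abs_le_iff)
  qed
  have pr: "2*p*r \<ge> - 2*a*b*(k^2+e^2)"
  proof -
    have "\<bar>p*r\<bar> \<le> 1 * (a*b*(k^2+e^2))"
      unfolding abs_mult by (rule mult_mono) (use pb ab1 rb in auto)
    then show ?thesis by (simp add: abs_le_iff)
  qed
  have pp: "p^2 \<le> k^2 + e^2"
  proof (cases "a^2*b^2 \<le> k^2 + e^2")
    case True
    have "p^2 \<le> (a*b)^2" using pb ab0 abs_le_square_iff[of p "a*b"] by simp
    then show ?thesis using True by (simp add: power_mult_distrib)
  next
    case False
    have c1: "b*(a - 1 + 4.935*u^2) \<le> k"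
      by (rule sos_core) (use ha hb hk hu he False in auto)
    have c2: "a*(b - 1 + 4.935*w^2) \<le> e"
      by (rule sos_core) (use ha hb hk hv he False in \<open>auto simp: algebra_simps\<close>)
    have "b*(1 - 4.935*u^2) \<le> b*x" by (rule mult_left_mono) (use hx hb in auto)
    moreover have "a*y \<le> a*b" by (rule mult_left_mono) (use hy ha in auto)
    ultimately have lo: "-k \<le> p" using c1 unfolding p_def by (simp add: algebra_simps)
    have "a*(1 - 4.935*w^2) \<le> a*y" by (rule mult_left_mono) (use hy ha in auto)
    moreover have "b*x \<le> b*a" by (rule mult_left_mono) (use hx hb in auto)
    ultimately have hi: "p \<le> e" using c2 unfolding p_def by (simp add: algebra_simps)
    show ?thesis
    proof (cases "p \<ge> 0")
      case True
      then have "p^2 \<le> e^2" using hi by (intro power_mono) auto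
      then show ?thesis using zero_le_power2[of k] by linarith
    next
      case False
      then have "(-p)^2 \<le> k^2" using lo by (intro power_mono) auto
      then have "p^2 \<le> k^2" by simp
      then show ?thesis using zero_le_power2[of e] by linarith
    qed
  qed
  have s1: "2*(a+b)*q + 2*p*r \<ge> 2*(1+a*b)*(k^2+e^2) + 4*k^2*e^2 - 2*a*b*(k^2+e^2)"
    using qlb pr by linarith
  have s2: "2*(1+a*b)*(k^2+e^2) + 4*k^2*e^2 - 2*a*b*(k^2+e^2) = 2*(k^2+e^2) + 4*k^2*e^2"
    by (simp add: algebra_simps)
  have z1: "0 \<le> q^2" by simp
  have z2: "0 \<le> 4*k^2*e^2" by simp
  have "2*(a+b)*q + q^2 - p^2 + 2*p*r - k^2 - e^2 \<ge> 0"
    using s1 s2 z1 z2 pp by (smt (verit))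
  then have "(a+b+q)^2 + p^2 - 2*a*b*(a*x - b*y)*p - (2 + 2*a*b) \<ge> 0"
    using id by linarith
  then show ?thesis unfolding p_def q_def by simp
qed



theorem theorem1p3:
  fixes A B U :: real
  assumes "0 < A" "A \<le> 1" "0 < B" "B \<le> 1"
    and "B \<ge> B0 A"
    and "GG A B U = 0"
    and "LL A B \<le> U" "U \<le> RR A B"
  shows "deriv (GG A B) U / pi \<ge> sqrt (2 * (1 + A*B))"
proof -
  note hA = assms(1,2) and hB = assms(3,4) and hB0 = assms(5) and hG = assms(6)
    and hL = assms(7) and hR = assms(8)
  define k where "k = kap A"
  define e where "e = eps B"
  define P where "P = PP A B"
  define c where "c = k^2 / (A*(A+B))"
  have A21: "A^2 \<le> 1" using hA by (intro power_le_one) auto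
  have B21: "B^2 \<le> 1" using hB by (intro power_le_one) auto
  have k0: "0 \<le> k" unfolding k_def kap_def using A21 by simp
  have kk: "k^2 = 1 - A^2" unfolding k_def kap_def using A21 by simp
  have e0: "0 \<le> e" unfolding e_def eps_def using B21 by simp
  have ee: "e^2 = 1 - B^2" unfolding e_def eps_def using B21 by simp
  have k1: "k \<le> 1"
  proof -
    have "k^2 \<le> 1^2" using kk by simp
    then show ?thesis by (rule power2_le_imp_le) simp
  qed
  have e1: "e \<le> 1"
  proof -
    have "e^2 \<le> 1^2" using ee by simp
    then show ?thesis by (rule power2_le_imp_le) simp
  qed
  have AB0: "0 < A*B" using hA hB by simp
  have X0: "0 < A + B" using hA hB by simp
  have c0: "0 \<le> c" unfolding c_def using hA hB by simp
  have MMe: "\<And>t. MM A B t = k*(P - t)" by (simp add: MM_def k_def P_def)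
  have NNe: "\<And>t. NN A B t = e*(t + c)" by (simp add: NN_def e_def c_def k_def)
  have LLe: "LL A B = k/(1+k)*P" by (simp add: LL_def k_def P_def PP_def)
  have RRe: "RR A B = (1 - e*c)/(1+e)" by (simp add: RR_def e_def c_def k_def)
  have Pe: "P = (1 + A*B)/(B*(A+B))" by (simp add: P_def PP_def)
  have P1: "1 \<le> P"
  proof -
    have h: "B*(A+B) \<le> 1 + A*B" using B21 by (simp add: algebra_simps power2_eq_square)
    have "0 < B*(A+B)" using hB X0 by simp
    then show ?thesis unfolding Pe using h by (simp add: le_divide_eq)
  qed

  have E1: "(1+k)*B^2 + A*(1-k)*B - 2*k \<ge> 0"
  proof -
    define D where "D = A^2*(1-k)^2 + 8*k*(1+k)"
    have D0: "0 \<le> D" unfolding D_def using k0 by simp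
    have "B0 A = (- A*(1-k) + sqrt D) / (2*(1+k))"
      unfolding B0_def D_def k_def by simp
    then have "(- A*(1-k) + sqrt D) / (2*(1+k)) \<le> B" using hB0 by simp
    then have s: "sqrt D \<le> 2*(1+k)*B + A*(1-k)" using k0 by (simp add: divide_le_eq algebra_simps)
    have "D \<le> (2*(1+k)*B + A*(1-k))^2"
    proof -
      have "(sqrt D)^2 \<le> (2*(1+k)*B + A*(1-k))^2"
        by (rule power_mono[OF s]) (simp add: D0)
      then show ?thesis using D0 by simp
    qed
    then have "0 \<le> (2*(1+k)*B + A*(1-k))^2 - D" by simp
    also have "(2*(1+k)*B + A*(1-k))^2 - D = 4*(1+k)*((1+k)*B^2 + A*(1-k)*B - 2*k)"
      unfolding D_def by (simp add: algebra_simps power2_eq_square)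
    finally have "0 \<le> 4*(1+k)*((1+k)*B^2 + A*(1-k)*B - 2*k)" .
    then show ?thesis using k0 by (simp add: zero_le_mult_iff)
  qed
  define DD where "DD = 1 + A*B - k*e - k - e"
  have DD0: "DD \<ge> 0"
  proof -
    have id: "2*((1+k)*B^2 + A*(1-k)*B - 2*k) = DD*(1 - k + e + k*e + A*B)"
      unfolding DD_def using kk ee by algebra
    have "0 \<le> k*e" using k0 e0 by simp
    then have f: "1 - k + e + k*e + A*B > 0" using k1 e0 AB0 by linarith
    show ?thesis
    proof (rule ccontr)
      assume "\<not> DD \<ge> 0"
      then have "DD*(1 - k + e + k*e + A*B) < 0" using f by (simp add: mult_neg_pos)
      then show False using id E1 by simp
    qed
  qed
  have E2: "(1+e)*A^2 + B*(1-e)*A - 2*e \<ge> 0"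
  proof -
    have id: "2*((1+e)*A^2 + B*(1-e)*A - 2*e) = DD*(1 - e + k + k*e + A*B)"
      unfolding DD_def using kk ee by algebra
    have "0 \<le> k*e" using k0 e0 by simp
    then have f: "1 - e + k + k*e + A*B \<ge> 0" using e1 k0 AB0 by linarith
    have "0 \<le> DD*(1 - e + k + k*e + A*B)" using DD0 f by simp
    then show ?thesis using id by simp
  qed

  define u where "u = k*(P - 1/2)"
  define w where "w = e*(1/2 + c)"
  have BX0: "0 < B*(A+B)" using hB X0 by simp
  have PB: "P*(B*(A+B)) = 1 + A*B" unfolding Pe using BX0 X0 hB by simp
  have hu: "2*u*B*(A+B) = k*(2+A*B-B^2)"
  proof -
    have "2*u*B*(A+B) = k*(2*(P*(B*(A+B))) - B*(A+B))" unfolding u_def by (simp add: algebra_simps)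
    also have "\<dots> = k*(2+A*B-B^2)" unfolding PB by (simp add: algebra_simps power2_eq_square)
    finally show ?thesis .
  qed
  have hw: "2*w*A*(A+B) = e*(2+A*B-A^2)"
  proof -
    have cA: "c*(A*(A+B)) = k^2" unfolding c_def using hA X0 by simp
    have "2*w*A*(A+B) = e*(A*(A+B) + 2*(c*(A*(A+B))))" unfolding w_def
      by (simp add: algebra_simps)
    then have "2*w*A*(A+B) = e*(A*(A+B) + 2*k^2)" using cA by simp
    then show ?thesis using kk by algebra
  qed
  have u0: "0 \<le> u" unfolding u_def using k0 P1 by simp
  have w0: "0 \<le> w" unfolding w_def using e0 c0 by simp
  have AX0: "0 < A*(A+B)" using hA X0 by simp
  have u1: "u \<le> 1/2"
  proof -
    have "k*(2+A*B-B^2) \<le> B*(A+B)" using E1 by (simp add: algebra_simps power2_eq_square)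
    then have "2*u*(B*(A+B)) \<le> 1*(B*(A+B))" using hu by (simp add: mult.assoc)
    then show ?thesis using BX0 by (simp only: mult_le_cancel_right) simp
  qed
  have w1: "w \<le> 1/2"
  proof -
    have "e*(2+A*B-A^2) \<le> A*(A+B)" using E2 by (simp add: algebra_simps power2_eq_square)
    then have "2*w*(A*(A+B)) \<le> 1*(A*(A+B))" using hw by (simp add: mult.assoc)
    then show ?thesis using AX0 by (simp only: mult_le_cancel_right) simp
  qed
  have uk: "k \<le> 2*u"
  proof -
    have "k*(B*(A+B)) \<le> k*(2+A*B-B^2)"
      using k0 B21 by (intro mult_left_mono) (simp_all add: algebra_simps power2_eq_square)
    also have "\<dots> = 2*u*(B*(A+B))" using hu by (simp add: mult.assoc)
    finally show ?thesis using mult_le_cancel_right_pos[OF BX0] by blast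
  qed
  have we: "e \<le> 2*w"
  proof -
    have "e*(A*(A+B)) \<le> e*(2+A*B-A^2)"
      using e0 A21 by (intro mult_left_mono) (simp_all add: algebra_simps power2_eq_square)
    also have "\<dots> = 2*w*(A*(A+B))" using hw by (simp add: mult.assoc)
    finally show ?thesis using mult_le_cancel_right_pos[OF AX0] by blast
  qed

  define L where "L = k/(1+k)*P"
  define R where "R = (1 - e*c)/(1+e)"
  have hL': "L \<le> U" using hL LLe L_def by simp
  have hR': "U \<le> R" using hR RRe R_def by simp
  have L0: "0 \<le> L" unfolding L_def using k0 P1 by simp
  have Lh: "L \<le> 1/2"
  proof -
    have "2*u = k*(2*P - 1)" unfolding u_def by (simp add: algebra_simps)
    then have "k*(2*P - 1) \<le> 1" using u1 by simp
    then have "2*(k*P) \<le> 1 + k" by (simp add: algebra_simps)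
    then show ?thesis unfolding L_def using k0 by (simp add: field_simps)
  qed
  have Rh: "1/2 \<le> R"
  proof -
    have "2*w = e*(1 + 2*c)" unfolding w_def by (simp add: algebra_simps)
    then have "e*(1 + 2*c) \<le> 1" using w1 by simp
    then show ?thesis unfolding R_def using e0 by (simp add: field_simps)
  qed
  have R1: "R \<le> 1"
    unfolding R_def using e0 c0 by (simp add: field_simps)
  have hML: "k*(P - L) = L" unfolding L_def using k0 by (simp add: field_simps)
  have NR: "e*(R + c) = 1 - R" unfolding R_def using e0 by (simp add: field_simps)
  have rng: "0 \<le> t \<and> t \<le> 1 \<and> 0 \<le> k*(P-t) \<and> k*(P-t) \<le> 1 \<and> 0 \<le> e*(t+c) \<and> e*(t+c) \<le> 1"
    if "L \<le> t" "t \<le> R" for t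
  proof (intro conjI)
    show "0 \<le> t" using that L0 by simp
    show "t \<le> 1" using that R1 by simp
    show "0 \<le> k*(P-t)" using that R1 P1 k0 by simp
    have "k*(P-t) \<le> k*(P-L)" using that k0 by (intro mult_left_mono) auto
    then show "k*(P-t) \<le> 1" using hML Lh by simp
    show "0 \<le> e*(t+c)" using that L0 e0 c0 by simp
    have "e*(t+c) \<le> e*(R+c)" using that e0 by (intro mult_left_mono) auto
    then show "e*(t+c) \<le> 1" using NR Rh by simp
  qed

  define F where "F = (\<lambda>t. (A+B) * sin(pi*t) + B*k * sin(pi*(k*(P-t))) + A*e * sin(pi*(e*(t+c))))"
  define F' where "F' = (\<lambda>t. pi*((A+B) * cos(pi*t) - B*k^2 * cos(pi*(k*(P-t))) + A*e^2 * cos(pi*(e*(t+c)))))"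
  define gg where "gg = (\<lambda>t. A * cos(pi*(k*(P-t))) - B * cos(pi*(e*(t+c))))"
  have GGe: "GG A B = (\<lambda>t. B * cos(pi*(k*(P-t))) - A * cos(pi*(e*(t+c))) - (A+B) * cos(pi*t))"
    by (rule ext) (simp add: GG_def MMe NNe)
  have dG: "(GG A B has_real_derivative pi * F t) (at t)" for t
    unfolding GGe F_def by (auto intro!: derivative_eq_intros simp: algebra_simps)
  have dF: "(F has_real_derivative F' t) (at t)" for t
    unfolding F_def F'_def by (auto intro!: derivative_eq_intros simp: algebra_simps power2_eq_square)
  have FG: "F' t + pi * GG A B t = pi * (A*B*gg t)" for t
  proof -
    have "F' t + pi * GG A B t = pi*(B*(1-k^2) * cos(pi*(k*(P-t))) - A*(1-e^2) * cos(pi*(e*(t+c))))"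
      unfolding F'_def GGe by (simp add: algebra_simps)
    also have "\<dots> = pi * (A*B*gg t)" unfolding gg_def kk ee by (simp add: algebra_simps power2_eq_square)
    finally show ?thesis .
  qed

  have Fnn: "0 \<le> F t" if "L \<le> t" "t \<le> R" for t
  proof -
    from rng[OF that] have r: "0 \<le> t" "t \<le> 1" "0 \<le> k*(P-t)" "k*(P-t) \<le> 1" "0 \<le> e*(t+c)" "e*(t+c) \<le> 1"
      by auto
    have "0 \<le> sin (pi*t)" using r by (intro sin_ge_zero) auto
    moreover have "0 \<le> sin (pi*(k*(P-t)))" using r by (intro sin_ge_zero) auto
    moreover have "0 \<le> sin (pi*(e*(t+c)))" using r by (intro sin_ge_zero) auto
    ultimately show ?thesis unfolding F_def using hA hB k0 e0 by simp
  qed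
  define g0 where "g0 = gg (1/2)"
  have g0e: "g0 = A * cos(pi*u) - B * cos(pi*w)" unfolding g0_def gg_def u_def w_def
    by (simp add: algebra_simps)
  have ggup: "g0 \<le> gg t" if "1/2 \<le> t" "t \<le> R" for t
  proof -
    have t: "L \<le> t" using that Lh by simp
    from rng[OF t that(2)] have r: "0 \<le> k*(P-t)" "k*(P-t) \<le> 1" "0 \<le> e*(t+c)" "e*(t+c) \<le> 1"
      by auto
    have m: "k*(P-t) \<le> u" unfolding u_def using that k0 by (intro mult_left_mono) auto
    have n: "w \<le> e*(t+c)" unfolding w_def using that e0 by (intro mult_left_mono) auto
    have "cos (pi*u) \<le> cos (pi*(k*(P-t)))"
      using r m u1 by (intro cos_monotone_0_pi_le) auto
    moreover have "cos (pi*(e*(t+c))) \<le> cos (pi*w)"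
      using r n w0 w1 by (intro cos_monotone_0_pi_le) auto
    ultimately have "A * cos(pi*u) \<le> A * cos (pi*(k*(P-t)))" "B * cos (pi*(e*(t+c))) \<le> B * cos(pi*w)"
      using hA hB by auto
    then show ?thesis unfolding g0e gg_def by simp
  qed
  have ggdn: "gg t \<le> g0" if "L \<le> t" "t \<le> 1/2" for t
  proof -
    have t: "t \<le> R" using that Rh by simp
    from rng[OF that(1) t] have r: "0 \<le> k*(P-t)" "k*(P-t) \<le> 1" "0 \<le> e*(t+c)" "e*(t+c) \<le> 1"
      by auto
    have m: "u \<le> k*(P-t)" unfolding u_def using that k0 by (intro mult_left_mono) auto
    have n: "e*(t+c) \<le> w" unfolding w_def using that e0 by (intro mult_left_mono) auto
    have "cos (pi*(k*(P-t))) \<le> cos (pi*u)"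
      using r m u0 by (intro cos_monotone_0_pi_le) auto
    moreover have "cos (pi*w) \<le> cos (pi*(e*(t+c)))"
      using r n w0 w1 by (intro cos_monotone_0_pi_le) auto
    ultimately have "A * cos (pi*(k*(P-t))) \<le> A * cos(pi*u)" "B * cos(pi*w) \<le> B * cos (pi*(e*(t+c)))"
      using hA hB by auto
    then show ?thesis unfolding g0e gg_def by simp
  qed

  define Phi where "Phi = (\<lambda>t. F t * F t + GG A B t * GG A B t - 2*A*B*g0*GG A B t)"
  have dPhi: "(Phi has_real_derivative (2*pi*A*B*F t*(gg t - g0))) (at t)" for t
  proof -
    have d1: "((\<lambda>x. F x * F x) has_real_derivative (F t * F' t + F' t * F t)) (at t)"
      by (rule DERIV_mult'[OF dF dF])
    have d2: "((\<lambda>x. GG A B x * GG A B x) has_real_derivative (GG A B t * (pi * F t) + pi * F t * GG A B t)) (at t)"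
      by (rule DERIV_mult'[OF dG dG])
    have d3: "((\<lambda>x. 2*A*B*g0 * GG A B x) has_real_derivative (2*A*B*g0 * (pi * F t))) (at t)"
      by (rule DERIV_cmult[OF dG])
    have d: "(Phi has_real_derivative (F t * F' t + F' t * F t + (GG A B t * (pi * F t) + pi * F t * GG A B t)
        - 2*A*B*g0 * (pi * F t))) (at t)"
      unfolding Phi_def by (rule DERIV_diff[OF DERIV_add[OF d1 d2] d3])
    have "F t * F' t + F' t * F t + (GG A B t * (pi * F t) + pi * F t * GG A B t)
        - 2*A*B*g0 * (pi * F t) = 2*F t*(F' t + pi * GG A B t) - 2*pi*A*B*g0*F t"
      by (simp add: algebra_simps)
    also have "\<dots> = 2*pi*A*B*F t*(gg t - g0)" unfolding FG by (simp add: algebra_simps)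
    finally show ?thesis using d by (rule DERIV_cong[rotated])
  qed

  define x where "x = cos (pi*u)"
  define y where "y = cos (pi*w)"
  define m1 where "m1 = sin (pi*u)"
  define m2 where "m2 = sin (pi*w)"
  have Fh: "F (1/2) = A + B + (B*k*m1 + A*e*m2)"
    unfolding F_def m1_def m2_def u_def w_def by simp
  have Gh: "GG A B (1/2) = B*x - A*y"
    unfolding GGe x_def y_def u_def w_def by simp
  have g0xy: "g0 = A*x - B*y" unfolding g0e x_def y_def by simp
  have hm1: "2*u \<le> m1" unfolding m1_def by (rule jordan_sin[OF u0 u1])
  have hm2: "2*w \<le> m2" unfolding m2_def by (rule jordan_sin[OF w0 w1])
  have pu: "pi*u \<le> pi/2" using mult_left_mono[OF u1, of pi] pi_gt_zero by simp
  have pw: "pi*w \<le> pi/2" using mult_left_mono[OF w1, of pi] pi_gt_zero by simp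
  have pu0: "0 \<le> pi*u" using u0 by simp
  have pw0: "0 \<le> pi*w" using w0 by simp
  have pu0': "-(pi/2) \<le> pi*u" using pu0 pi_gt_zero by linarith
  have pw0': "-(pi/2) \<le> pi*w" using pw0 pi_gt_zero by linarith
  have x0: "0 \<le> x" unfolding x_def by (rule cos_ge_zero[OF pu0' pu])
  have y0: "0 \<le> y" unfolding y_def by (rule cos_ge_zero[OF pw0' pw])
  have xA: "x \<le> A"
  proof -
    have km: "k \<le> m1" using uk hm1 by linarith
    have h1: "k^2 \<le> m1^2" using power_mono[OF km k0, of 2] .
    have h2: "m1^2 + x^2 = 1" unfolding x_def m1_def by (rule sin_cos_squared_add)
    have h3: "x^2 \<le> A^2" using h1 h2 kk by linarith
    show ?thesis using power2_le_imp_le[OF h3] hA by simp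
  qed
  have yB: "y \<le> B"
  proof -
    have km: "e \<le> m2" using we hm2 by linarith
    have h1: "e^2 \<le> m2^2" using power_mono[OF km e0, of 2] .
    have h2: "m2^2 + y^2 = 1" unfolding y_def m2_def by (rule sin_cos_squared_add)
    have h3: "y^2 \<le> B^2" using h1 h2 ee by linarith
    show ?thesis using power2_le_imp_le[OF h3] hB by simp
  qed
  have xlo: "1 - 4.935*u^2 \<le> x"
  proof -
    have h1: "1 - (pi*u)^2/2 \<le> x" unfolding x_def by (rule cos_lower)
    have h2: "(pi*u)^2/2 = (pi^2/2)*u^2" by (simp add: power_mult_distrib)
    have h3: "(pi^2/2)*u^2 \<le> 4.935*u^2" by (rule mult_right_mono[OF pi_sq_bound]) simp
    show ?thesis using h1 h2 h3 by linarith
  qed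
  have ylo: "1 - 4.935*w^2 \<le> y"
  proof -
    have h1: "1 - (pi*w)^2/2 \<le> y" unfolding y_def by (rule cos_lower)
    have h2: "(pi*w)^2/2 = (pi^2/2)*w^2" by (simp add: power_mult_distrib)
    have h3: "(pi^2/2)*w^2 \<le> 4.935*w^2" by (rule mult_right_mono[OF pi_sq_bound]) simp
    show ?thesis using h1 h2 h3 by linarith
  qed
  have Phih: "2 + 2*A*B \<le> Phi (1/2)"
  proof -
    have "2 + 2*A*B \<le> (A+B + (B*k*m1 + A*e*m2))^2 + (B*x - A*y)^2 - 2*A*B*(A*x - B*y)*(B*x - A*y)"
      by (rule key_ineq[OF hA hB k0 kk e0 ee u0 hu w0 hw hm1 hm2 x0 xA xlo y0 yB ylo])
    also have "\<dots> = Phi (1/2)" unfolding Phi_def Fh Gh g0xy by (simp only: power2_eq_square)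
    finally show ?thesis .
  qed

  have mono: "Phi (1/2) \<le> Phi U"
  proof (cases "1/2 \<le> U")
    case True
    show ?thesis
    proof (rule DERIV_nonneg_imp_nondecreasing[OF True])
      fix t assume t: "1/2 \<le> t" "t \<le> U"
      then have tL: "L \<le> t" and tR: "t \<le> R" using Lh hR' by auto
      have "0 \<le> 2*pi*A*B*F t" using Fnn[OF tL tR] hA hB by simp
      moreover have "0 \<le> gg t - g0" using ggup[OF t(1) tR] by simp
      ultimately have "0 \<le> 2*pi*A*B*F t*(gg t - g0)" by (rule mult_nonneg_nonneg)
      then show "\<exists>y. (Phi has_real_derivative y) (at t) \<and> 0 \<le> y" using dPhi[of t] by blast
    qed
  next
    case False
    then have U2: "U \<le> 1/2" by simp
    show ?thesis
    proof (rule DERIV_nonpos_imp_nonincreasing[OF U2])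
      fix t assume t: "U \<le> t" "t \<le> 1/2"
      then have tL: "L \<le> t" and tR: "t \<le> R" using hL' Rh by auto
      have "0 \<le> 2*pi*A*B*F t" using Fnn[OF tL tR] hA hB by simp
      moreover have "gg t - g0 \<le> 0" using ggdn[OF tL t(2)] by simp
      ultimately have "2*pi*A*B*F t*(gg t - g0) \<le> 0" by (rule mult_nonneg_nonpos)
      then show "\<exists>y. (Phi has_real_derivative y) (at t) \<and> y \<le> 0" using dPhi[of t] by blast
    qed
  qed
  have PhiU: "Phi U = F U * F U" unfolding Phi_def using hG by simp
  have FU0: "0 \<le> F U" using Fnn[OF hL' hR'] .
  have sq: "2 * (1 + A*B) \<le> (F U)^2" using Phih mono PhiU by (simp add: power2_eq_square algebra_simps)
  have "sqrt (2 * (1 + A*B)) \<le> F U" by (rule real_le_lsqrt[OF FU0 sq])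
  moreover have "deriv (GG A B) U = pi * F U" by (rule DERIV_imp_deriv[OF dG])
  ultimately show ?thesis by simp
qed
end
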